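(* Let $(T,\sigma)$ be a confluent temperature-1 TAS whose maximal producible assembly $\alpha_{\max}$ has a binding graph containing $\mathrm{Grid}(m,p,q)$. Let $r$ be a non-empty finite free path and $A\in\mathbb Z^2$. If the path $A.r^{\omega}$ is a subgraph of the binding graph of $\alpha_{\max}$, then there is a vertex $B\in\mathbb Z^2$ such that the bi-infinite path ${}^{\omega}r.B.r^{\omega}$ is a subgraph of the binding graph of $\alpha_{\max}$.
   Context: Directions $D=\{E=(1,0),N=(0,1),S=(0,-1),W=(-1,0)\}$; $\mathbb Z^2$ is the grid graph; a free path is a word over $D$ whose walk is simple; $A.m$ is the path from $A$ following $m$; $\vec m$ is the displacement of finite $m$; ${}^\omega r.B.r^\omega$ is the bi-infinite path through $B$ following $r$ periodically in both directions. Grid: for finite free paths $m,p,q$ with $\vec p,\vec q$ not collinear and ${}^\omega p^\omega$, ${}^\omega q^\omega$ free paths, $\mathrm{Grid}(m,p,q)$ is the union over $i,j\in\mathbb Z$ of the paths ${}^\omega p.(\vec m+i\vec p+j\vec q).p^\omega$ and ${}^\omega q.(\vec m+i\vec p+j\vec q).q^\omega$. Tile assembly: tile type $t:D\to\Sigma$; temperature-1 TAS $(T,\sigma)$; assembly = partial map $\alpha:\mathbb Z^2\to T\cup\{\sigma\}$; binding graph edge $\{v,v+d\}$ iff $\alpha(v)_d=\alpha(v+d)_{-d}$; producible = connected binding graph with $\alpha((0,0))=\sigma$; confluent = any two producible assemblies agree on common domain; $\alpha_{\max}$ the unique maximal producible assembly. *)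

theory Defs
  imports Main
begin

type_synonym pt = "int \<times> int"

datatype dir = E | N | S | W

fun dvec :: "dir \<Rightarrow> pt" where
  "dvec E = (1, 0)" | "dvec N = (0, 1)" | "dvec S = (0, -1)" | "dvec W = (-1, 0)"

fun opp :: "dir \<Rightarrow> dir" where
  "opp E = W" | "opp W = E" | "opp N = S" | "opp S = N"

definition padd :: "pt \<Rightarrow> pt \<Rightarrow> pt" where
  "padd a b = (fst a + fst b, snd a + snd b)"

definition psmul :: "int \<Rightarrow> pt \<Rightarrow> pt" where
  "psmul k a = (k * fst a, k * snd a)"

definition disp :: "dir list \<Rightarrow> pt" where
  "disp m = foldr (\<lambda>d acc. padd (dvec d) acc) m (0, 0)"

definition free_fin :: "dir list \<Rightarrow> bool" where
  "free_fin m \<longleftrightarrow> inj_on (\<lambda>i. disp (take i m)) {0..length m}"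

text \<open>Vertex number i (i an integer) of the periodic walk following r which is at X at index 0.
  Restricted to indices i \<ge> 0 it is the path X.r^omega; on all of the integers it is the
  bi-infinite path ^omega r.X.r^omega.  Consecutive vertices differ by dvec (r ! (i mod |r|)).\<close>
definition per_pos :: "pt \<Rightarrow> dir list \<Rightarrow> int \<Rightarrow> pt" where
  "per_pos X r i =
     padd X (padd (psmul (i div int (length r)) (disp r))
                  (disp (take (nat (i mod int (length r))) r)))"

definition free_biinf :: "dir list \<Rightarrow> bool" where
  "free_biinf p \<longleftrightarrow> p \<noteq> [] \<and> inj (per_pos (0, 0) p)"

type_synonym 'g tile = "dir \<Rightarrow> 'g"
type_synonym 'g assembly = "pt \<Rightarrow> 'g tile option"

definition binds :: "'g assembly \<Rightarrow> pt \<Rightarrow> dir \<Rightarrow> bool" where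
  "binds \<alpha> v d \<longleftrightarrow> (\<exists>t u. \<alpha> v = Some t \<and> \<alpha> (padd v (dvec d)) = Some u \<and> t d = u (opp d))"

definition bg_edge :: "'g assembly \<Rightarrow> pt \<Rightarrow> pt \<Rightarrow> bool" where
  "bg_edge \<alpha> v w \<longleftrightarrow> (\<exists>d. w = padd v (dvec d) \<and> binds \<alpha> v d)"

definition path_sub :: "'g assembly \<Rightarrow> int set \<Rightarrow> (int \<Rightarrow> pt) \<Rightarrow> bool" where
  "path_sub \<alpha> I f \<longleftrightarrow> (\<forall>i\<in>I. f i \<in> dom \<alpha>) \<and>
     (\<forall>i. i \<in> I \<and> i + 1 \<in> I \<longrightarrow> bg_edge \<alpha> (f i) (f (i + 1)))"

definition producible :: "'g tile set \<Rightarrow> 'g tile \<Rightarrow> 'g assembly \<Rightarrow> bool" where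
  "producible T \<sigma> \<alpha> \<longleftrightarrow> \<alpha> (0, 0) = Some \<sigma> \<and> ran \<alpha> \<subseteq> insert \<sigma> T \<and>
     (\<forall>v\<in>dom \<alpha>. ((0, 0), v) \<in> {(x, y). bg_edge \<alpha> x y}\<^sup>*)"

definition confluent :: "'g tile set \<Rightarrow> 'g tile \<Rightarrow> bool" where
  "confluent T \<sigma> \<longleftrightarrow> (\<forall>\<alpha> \<beta>. producible T \<sigma> \<alpha> \<longrightarrow> producible T \<sigma> \<beta> \<longrightarrow>
      (\<forall>v\<in>dom \<alpha> \<inter> dom \<beta>. \<alpha> v = \<beta> v))"

definition is_max_producible :: "'g tile set \<Rightarrow> 'g tile \<Rightarrow> 'g assembly \<Rightarrow> bool" where
  "is_max_producible T \<sigma> \<alpha> \<longleftrightarrow> producible T \<sigma> \<alpha> \<and>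
     (\<forall>\<beta>. producible T \<sigma> \<beta> \<longrightarrow> \<beta> \<subseteq>\<^sub>m \<alpha>)"

definition grid_ok :: "dir list \<Rightarrow> dir list \<Rightarrow> dir list \<Rightarrow> bool" where
  "grid_ok m p q \<longleftrightarrow> free_fin m \<and> free_fin p \<and> free_fin q \<and>
     fst (disp p) * snd (disp q) - snd (disp p) * fst (disp q) \<noteq> 0 \<and>
     free_biinf p \<and> free_biinf q"

definition grid_sub :: "'g assembly \<Rightarrow> dir list \<Rightarrow> dir list \<Rightarrow> dir list \<Rightarrow> bool" where
  "grid_sub \<alpha> m p q \<longleftrightarrow> (\<forall>i j::int.
     path_sub \<alpha> UNIV (per_pos (padd (disp m) (padd (psmul i (disp p)) (psmul j (disp q)))) p) \<and>
     path_sub \<alpha> UNIV (per_pos (padd (disp m) (padd (psmul i (disp p)) (psmul j (disp q)))) q))"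

end

theory Submission
  imports Defs "HOL-Library.Infinite_Set"
begin

lemma padd_0[simp]: "padd (0,0) x = x" "padd x (0,0) = x" by (auto simp: padd_def)
lemma disp_Nil[simp]: "disp [] = (0,0)" by (simp add: disp_def)

definition cr :: "pt \<Rightarrow> pt \<Rightarrow> int" where
  "cr a b = fst a * snd b - snd a * fst b"

lemma cr_padd[simp]: "cr a (padd b c) = cr a b + cr a c"
  by (simp add: cr_def padd_def algebra_simps)
lemma cr_psmul[simp]: "cr a (psmul k b) = k * cr a b"
  by (simp add: cr_def psmul_def algebra_simps)
lemma cr_self[simp]: "cr a a = 0"
  by (simp add: cr_def)

lemma per_pos_0[simp]: "per_pos X r 0 = X"
  by (simp add: per_pos_def psmul_def padd_def)

lemma per_pos_transl: "per_pos (padd X Y) r j = padd (per_pos X r j) Y"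
  by (simp add: per_pos_def padd_def algebra_simps)

lemma per_pos_shift:
  assumes "r \<noteq> []"
  shows "per_pos X r (j + t * int (length r)) = padd (per_pos X r j) (psmul t (disp r))"
proof -
  have n: "int (length r) \<noteq> 0" using assms by simp
  have "(j + t * int (length r)) div int (length r) = t + j div int (length r)"
    using n by simp
  moreover have "(j + t * int (length r)) mod int (length r) = j mod int (length r)"
    by simp
  ultimately show ?thesis
    by (simp add: per_pos_def padd_def psmul_def algebra_simps)
qed

lemma per_pos_mult:
  assumes "r \<noteq> []"
  shows "per_pos X r (t * int (length r)) = padd X (psmul t (disp r))"
  using per_pos_shift[OF assms, of X 0 t] by simp

lemma per_pos_origin: "per_pos X r j = padd X (per_pos (0,0) r j)"
  using per_pos_transl[of "(0,0)" X r j] by (simp add: padd_def add.commute)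

lemma take_prefix_finite: "finite {disp (take t p) | t. True}"
proof -
  have "{disp (take t p) | t. True} \<subseteq> (\<lambda>t. disp (take t p)) ` {..length p}"
  proof
    fix x assume "x \<in> {disp (take t p) | t. True}"
    then obtain t where x: "x = disp (take t p)" by blast
    show "x \<in> (\<lambda>t. disp (take t p)) ` {..length p}"
    proof (cases "t \<le> length p")
      case True thus ?thesis using x by blast
    next
      case False
      hence "take t p = take (length p) p" by simp
      thus ?thesis using x by (metis atMost_iff image_eqI order_refl)
    qed
  qed
  thus ?thesis by (rule finite_subset) simp
qed

lemma finite_int_bound: "finite (Z::int set) \<Longrightarrow> \<exists>M\<ge>0. \<forall>x\<in>Z. \<bar>x\<bar> \<le> M"
proof -
  assume f: "finite Z"
  define M where "M = Max (insert 0 (abs ` Z))"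
  have "\<forall>x\<in>Z. \<bar>x\<bar> \<le> M" using f by (auto simp: M_def)
  moreover have "M \<ge> 0" using f by (auto simp: M_def)
  ultimately show ?thesis by blast
qed

lemma prefix_cr_bound: "\<exists>M\<ge>0. \<forall>t. \<bar>cr a (disp (take t p))\<bar> \<le> M"
proof -
  have "finite (cr a ` {disp (take t p) | t. True})" using take_prefix_finite by simp
  then obtain M where "M \<ge> 0" "\<forall>x\<in>cr a ` {disp (take t p) | t. True}. \<bar>x\<bar> \<le> M"
    using finite_int_bound by blast
  thus ?thesis by blast
qed

lemma per_pos_cr_bound:
  "\<exists>M\<ge>0. \<forall>X k. \<bar>cr (disp p) (per_pos X p k) - cr (disp p) X\<bar> \<le> M"
proof -
  obtain M where M: "M \<ge> 0" "\<forall>t. \<bar>cr (disp p) (disp (take t p))\<bar> \<le> M"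
    using prefix_cr_bound by blast
  have "\<forall>X k. \<bar>cr (disp p) (per_pos X p k) - cr (disp p) X\<bar> \<le> M"
    using M(2) by (simp add: per_pos_def)
  thus ?thesis using M(1) by blast
qed


lemma padd_dvec_opp: "padd (padd x (dvec d)) (dvec (opp d)) = x"
  by (cases d) (auto simp: padd_def)

lemma opp_opp[simp]: "opp (opp d) = d" by (cases d) auto

lemma bg_edge_sym: "bg_edge \<alpha> x y \<Longrightarrow> bg_edge \<alpha> y x"
  unfolding bg_edge_def binds_def
  by (metis padd_dvec_opp opp_opp)

definition Ew :: "'g assembly \<Rightarrow> pt \<Rightarrow> (pt \<times> pt) set" where
  "Ew \<alpha> w = {(x,y). bg_edge \<alpha> x y \<and> x \<noteq> w \<and> y \<noteq> w}"

definition Eg :: "'g assembly \<Rightarrow> (pt \<times> pt) set" where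
  "Eg \<alpha> = {(x,y). bg_edge \<alpha> x y}"

lemma sym_Ew: "sym (Ew \<alpha> w)"
  unfolding Ew_def sym_def using bg_edge_sym by blast

lemma sym_Eg: "sym (Eg \<alpha>)"
  unfolding Eg_def sym_def using bg_edge_sym by blast

lemma Ew_rev: "(x,y) \<in> (Ew \<alpha> w)\<^sup>* \<Longrightarrow> (y,x) \<in> (Ew \<alpha> w)\<^sup>*"
  by (meson sym_Ew sym_rtrancl symD)

lemma Eg_rev: "(x,y) \<in> (Eg \<alpha>)\<^sup>* \<Longrightarrow> (y,x) \<in> (Eg \<alpha>)\<^sup>*"
  by (meson sym_Eg sym_rtrancl symD)

lemma seg_up:
  assumes ps: "path_sub \<alpha> UNIV f" and ij: "i \<le> j" and av: "\<forall>t. i \<le> t \<and> t \<le> j \<longrightarrow> f t \<noteq> w"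
  shows "(f i, f j) \<in> (Ew \<alpha> w)\<^sup>*"
  using ij av
proof (induction j rule: int_ge_induct)
  case base thus ?case by simp
next
  case (step j)
  have "(f i, f j) \<in> (Ew \<alpha> w)\<^sup>*" using step by auto
  moreover have "(f j, f (j+1)) \<in> Ew \<alpha> w"
    using ps step.prems step.hyps unfolding path_sub_def Ew_def by auto
  ultimately show ?case by (rule rtrancl_into_rtrancl)
qed

lemma seg:
  assumes ps: "path_sub \<alpha> UNIV f" and av: "\<forall>t. min i j \<le> t \<and> t \<le> max i j \<longrightarrow> f t \<noteq> w"
  shows "(f i, f j) \<in> (Ew \<alpha> w)\<^sup>*"
proof (cases "i \<le> j")
  case True thus ?thesis using seg_up[OF ps True] av by auto
next
  case False
  hence "(f j, f i) \<in> (Ew \<alpha> w)\<^sup>*" using seg_up[OF ps, of j i w] av by auto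
  thus ?thesis by (rule Ew_rev)
qed

lemma avoid_finite:
  assumes "(x,y) \<in> (Eg \<alpha>)\<^sup>*"
  shows "\<exists>F. finite F \<and> x \<in> F \<and> y \<in> F \<and> (\<forall>w. w \<notin> F \<longrightarrow> (x,y) \<in> (Ew \<alpha> w)\<^sup>*)"
  using assms
proof (induction rule: rtrancl_induct)
  case base
  show ?case by (rule exI[of _ "{x}"]) auto
next
  case (step y z)
  then obtain F where F: "finite F" "x \<in> F" "y \<in> F" "\<forall>w. w \<notin> F \<longrightarrow> (x,y) \<in> (Ew \<alpha> w)\<^sup>*" by blast
  show ?case
  proof (rule exI[of _ "insert z F"], intro conjI allI impI)
    fix w assume "w \<notin> insert z F"
    hence "(x,y) \<in> (Ew \<alpha> w)\<^sup>*" using F(4) by blast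
    moreover have "(y,z) \<in> Ew \<alpha> w" using F step(2) \<open>w \<notin> insert z F\<close> by (auto simp: Ew_def Eg_def)
    ultimately
    show "(x,z) \<in> (Ew \<alpha> w)\<^sup>*" by (rule rtrancl_into_rtrancl)
  qed (use F in auto)
qed

lemma forcing:
  assumes mx: "is_max_producible T \<sigma> \<alpha>"
    and reach: "((0,0), u) \<in> (Ew \<alpha> w)\<^sup>*"
    and wu: "w = padd u (dvec d)" and w0: "w \<noteq> (0,0)"
    and au: "\<alpha> u = Some t" and sT: "s \<in> insert \<sigma> T" and gl: "t d = s (opp d)"
  shows "\<alpha> w = Some s"
proof -
  define C where "C = {x. ((0,0), x) \<in> (Ew \<alpha> w)\<^sup>*}"
  define \<beta> where "\<beta> = (\<lambda>x. if x = w then Some s else if x \<in> C then \<alpha> x else None)"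
  have prod: "producible T \<sigma> \<alpha>" and maxi: "\<forall>\<beta>. producible T \<sigma> \<beta> \<longrightarrow> \<beta> \<subseteq>\<^sub>m \<alpha>"
    using mx unfolding is_max_producible_def by auto
  have C0: "(0,0) \<in> C" by (simp add: C_def)
  have wC: "w \<notin> C"
  proof
    assume "w \<in> C"
    hence "((0,0), w) \<in> (Ew \<alpha> w)\<^sup>*" by (simp add: C_def)
    then show False using w0
      by (cases rule: rtrancl.cases) (auto simp: Ew_def)
  qed
  have reachC: "((0,0), x) \<in> {(x, y). bg_edge \<beta> x y}\<^sup>*" if "x \<in> C" for x
  proof -
    have "((0,0), x) \<in> (Ew \<alpha> w)\<^sup>*" using that by (simp add: C_def)
    thus ?thesis
    proof (induction rule: rtrancl_induct)
      case base thus ?case by simp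
    next
      case (step y z)
      have yC: "y \<in> C" using step(1) by (simp add: C_def)
      have zC: "z \<in> C" using step(1,2) by (simp add: C_def)
      have "bg_edge \<alpha> y z" "y \<noteq> w" "z \<noteq> w" using step(2) by (auto simp: Ew_def)
      hence "bg_edge \<beta> y z" using yC zC unfolding bg_edge_def binds_def \<beta>_def by auto
      thus ?case using step(3) by (simp add: rtrancl_into_rtrancl)
    qed
  qed
  have uC: "u \<in> C" using reach by (simp add: C_def)
  have uw: "u \<noteq> w" using uC wC by auto
  have edge: "bg_edge \<beta> u w"
    unfolding bg_edge_def binds_def \<beta>_def using wu uC uw au gl by auto
  have pb: "producible T \<sigma> \<beta>"
    unfolding producible_def
  proof (intro conjI ballI)
    show "\<beta> (0,0) = Some \<sigma>" using C0 w0 prod by (simp add: \<beta>_def producible_def)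
    show "ran \<beta> \<subseteq> insert \<sigma> T"
    proof
      fix y assume "y \<in> ran \<beta>"
      then obtain x where "\<beta> x = Some y" by (auto simp: ran_def)
      show "y \<in> insert \<sigma> T"
      proof (cases "x = w")
        case True thus ?thesis using \<open>\<beta> x = Some y\<close> sT by (simp add: \<beta>_def)
      next
        case False
        hence "\<alpha> x = Some y" using \<open>\<beta> x = Some y\<close> by (simp add: \<beta>_def split: if_splits)
        thus ?thesis using prod unfolding producible_def by (meson ranI subsetD)
      qed
    qed
    fix x assume "x \<in> dom \<beta>"
    hence "x = w \<or> x \<in> C" by (auto simp: \<beta>_def split: if_splits)
    thus "((0,0), x) \<in> {(x, y). bg_edge \<beta> x y}\<^sup>*"
    proof
      assume "x = w"
      thus ?thesis using reachC[OF uC] edge by (simp add: rtrancl_into_rtrancl)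
    qed (rule reachC)
  qed
  hence "\<beta> \<subseteq>\<^sub>m \<alpha>" using maxi by blast
  moreover have "\<beta> w = Some s" by (simp add: \<beta>_def)
  ultimately show ?thesis by (metis domI map_le_def)
qed

lemma bg_edge_transl:
  assumes "bg_edge \<alpha> x y" "\<alpha> (padd x l) = \<alpha> x" "\<alpha> (padd y l) = \<alpha> y"
  shows "bg_edge \<alpha> (padd x l) (padd y l)"
proof -
  obtain d where d: "y = padd x (dvec d)" "binds \<alpha> x d" using assms(1) by (auto simp: bg_edge_def)
  have "padd y l = padd (padd x l) (dvec d)" using d(1) by (simp add: padd_def algebra_simps)
  moreover have "binds \<alpha> (padd x l) d" using d assms(2,3) calculation by (simp add: binds_def)
  ultimately show ?thesis by (auto simp: bg_edge_def)
qed

lemma copy: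
  assumes mx: "is_max_producible T \<sigma> \<alpha>"
    and walk: "\<forall>k. bg_edge \<alpha> (Y k) (Y (Suc k))"
    and start: "\<alpha> (padd (Y 0) l) = \<alpha> (Y 0)"
    and route: "\<forall>k. padd (Y k) l \<noteq> padd (Y 0) l \<longrightarrow>
        padd (Y k) l \<noteq> (0,0) \<and> ((0,0), padd (Y 0) l) \<in> (Ew \<alpha> (padd (Y k) l))\<^sup>*"
  shows "\<alpha> (padd (Y k) l) = \<alpha> (Y k)"
proof -
  have ran: "ran \<alpha> \<subseteq> insert \<sigma> T" using mx by (simp add: is_max_producible_def producible_def)
  have "\<forall>j\<le>k. \<alpha> (padd (Y j) l) = \<alpha> (Y j)"
  proof (induction k)
    case 0 thus ?case using start by simp
  next
    case (Suc k)
    have IH: "\<And>j. j \<le> k \<Longrightarrow> \<alpha> (padd (Y j) l) = \<alpha> (Y j)" using Suc by blast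
    define w where "w = padd (Y (Suc k)) l"
    have goal: "\<alpha> w = \<alpha> (Y (Suc k))"
    proof (cases "\<exists>j\<le>k. padd (Y j) l = w")
      case True
      then obtain j where j: "j \<le> k" "padd (Y j) l = w" by blast
      hence "Y j = Y (Suc k)" unfolding w_def by (simp add: padd_def prod_eq_iff)
      thus ?thesis using IH[OF j(1)] j(2) by simp
    next
      case False
      hence nw: "\<And>j. j \<le> k \<Longrightarrow> padd (Y j) l \<noteq> w" by blast
      have "w \<noteq> padd (Y 0) l" using nw[of 0] by simp
      hence r: "w \<noteq> (0,0)" "((0,0), padd (Y 0) l) \<in> (Ew \<alpha> w)\<^sup>*"
        using route unfolding w_def by auto
      have pre: "(padd (Y 0) l, padd (Y j) l) \<in> (Ew \<alpha> w)\<^sup>*" if "j \<le> k" for j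
        using that
      proof (induction j)
        case 0 thus ?case by simp
      next
        case (Suc j)
        have "bg_edge \<alpha> (padd (Y j) l) (padd (Y (Suc j)) l)"
          using bg_edge_transl[OF walk[rule_format, of j]] IH Suc.prems by simp
        hence "(padd (Y j) l, padd (Y (Suc j)) l) \<in> Ew \<alpha> w"
          using nw[of j] nw[of "Suc j"] Suc.prems by (simp add: Ew_def)
        thus ?case using Suc by (meson Suc_leD rtrancl_into_rtrancl)
      qed
      have reach: "((0,0), padd (Y k) l) \<in> (Ew \<alpha> w)\<^sup>*"
        using r(2) pre[of k] by (meson order_refl rtrancl_trans)
      obtain d where d: "Y (Suc k) = padd (Y k) (dvec d)" "binds \<alpha> (Y k) d"
        using walk by (auto simp: bg_edge_def)
      obtain t s where ts: "\<alpha> (Y k) = Some t" "\<alpha> (padd (Y k) (dvec d)) = Some s" "t d = s (opp d)"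
        using d(2) by (auto simp: binds_def)
      have sT: "s \<in> insert \<sigma> T" using ts(2) ran by (meson ranI subsetD)
      have wd: "w = padd (padd (Y k) l) (dvec d)" unfolding w_def d(1) by (simp add: padd_def algebra_simps)
      have at: "\<alpha> (padd (Y k) l) = Some t" using IH[of k] ts(1) by simp
      have "\<alpha> w = Some s" by (rule forcing[OF mx reach wd r(1) at sT ts(3)])
      thus ?thesis using ts(2) d(1) by simp
    qed
    show ?case using IH goal unfolding w_def by (metis le_Suc_eq)
  qed
  thus ?thesis by simp
qed


definition cpt :: "dir list \<Rightarrow> dir list \<Rightarrow> dir list \<Rightarrow> int \<Rightarrow> int \<Rightarrow> pt" where
  "cpt m p q i j = padd (disp m) (padd (psmul i (disp p)) (psmul j (disp q)))"

lemma row_pt: "p \<noteq> [] \<Longrightarrow> per_pos (cpt m p q i j) p (t * int (length p)) = cpt m p q (i+t) j"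
  by (simp add: per_pos_mult cpt_def padd_def psmul_def algebra_simps)

lemma col_pt: "q \<noteq> [] \<Longrightarrow> per_pos (cpt m p q i j) q (t * int (length q)) = cpt m p q i (j+t)"
  by (simp add: per_pos_mult cpt_def padd_def psmul_def algebra_simps)

lemma inj_line: "free_biinf p \<Longrightarrow> per_pos X p k1 = per_pos X p k2 \<Longrightarrow> k1 = k2"
proof -
  assume fb: "free_biinf p" and e: "per_pos X p k1 = per_pos X p k2"
  have "padd X (per_pos (0,0) p k1) = padd X (per_pos (0,0) p k2)"
    using e by (simp only: per_pos_origin[of X p k1] per_pos_origin[of X p k2])
  hence "per_pos (0,0) p k1 = per_pos (0,0) p k2" by (simp add: padd_def prod_eq_iff)
  thus "k1 = k2" using fb unfolding free_biinf_def by (meson injD)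
qed

lemma abs_le_mult: "(c::int) \<noteq> 0 \<Longrightarrow> \<bar>i\<bar> \<le> \<bar>i * c\<bar>"
proof -
  assume "c \<noteq> 0"
  hence "1 \<le> \<bar>c\<bar>" by linarith
  hence "\<bar>i\<bar> * 1 \<le> \<bar>i\<bar> * \<bar>c\<bar>" by (intro mult_left_mono) auto
  thus ?thesis by (simp add: abs_mult)
qed

lemma bad_cols:
  assumes D: "cr (disp q) (disp p) \<noteq> 0"
  shows "\<exists>Bd\<ge>0. \<forall>i j k. per_pos (cpt m p q i j) q k = w \<longrightarrow> \<bar>i\<bar> \<le> Bd"
proof -
  obtain M where M: "M \<ge> 0" "\<forall>X k. \<bar>cr (disp q) (per_pos X q k) - cr (disp q) X\<bar> \<le> M"
    using per_pos_cr_bound by blast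
  define Bd where "Bd = \<bar>cr (disp q) w\<bar> + \<bar>cr (disp q) (disp m)\<bar> + M"
  have "\<bar>i\<bar> \<le> Bd" if h: "per_pos (cpt m p q i j) q k = w" for i j k
  proof -
    have e: "cr (disp q) (cpt m p q i j) = cr (disp q) (disp m) + i * cr (disp q) (disp p)"
      by (simp add: cpt_def)
    have "\<bar>cr (disp q) w - cr (disp q) (cpt m p q i j)\<bar> \<le> M" using M(2) h by metis
    hence "\<bar>i * cr (disp q) (disp p)\<bar> \<le> Bd" unfolding Bd_def e by linarith
    thus ?thesis using abs_le_mult[OF D, of i] by linarith
  qed
  moreover have "Bd \<ge> 0" using M(1) by (simp add: Bd_def)
  ultimately show ?thesis by blast
qed

lemma bad_rows:
  assumes D: "cr (disp p) (disp q) \<noteq> 0"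
  shows "\<exists>Bd\<ge>0. \<forall>i j k. per_pos (cpt m p q i j) p k = w \<longrightarrow> \<bar>j\<bar> \<le> Bd"
proof -
  obtain M where M: "M \<ge> 0" "\<forall>X k. \<bar>cr (disp p) (per_pos X p k) - cr (disp p) X\<bar> \<le> M"
    using per_pos_cr_bound by blast
  define Bd where "Bd = \<bar>cr (disp p) w\<bar> + \<bar>cr (disp p) (disp m)\<bar> + M"
  have "\<bar>j\<bar> \<le> Bd" if h: "per_pos (cpt m p q i j) p k = w" for i j k
  proof -
    have e: "cr (disp p) (cpt m p q i j) = cr (disp p) (disp m) + j * cr (disp p) (disp q)"
      by (simp add: cpt_def)
    have "\<bar>cr (disp p) w - cr (disp p) (cpt m p q i j)\<bar> \<le> M" using M(2) h by metis
    hence "\<bar>j * cr (disp p) (disp q)\<bar> \<le> Bd" unfolding Bd_def e by linarith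
    thus ?thesis using abs_le_mult[OF D, of j] by linarith
  qed
  moreover have "Bd \<ge> 0" using M(1) by (simp add: Bd_def)
  ultimately show ?thesis by blast
qed

lemma cr_swap: "cr a b = - cr b a" by (simp add: cr_def)

lemma side_choice:
  assumes fb: "free_biinf p" and ne: "X \<noteq> w" and np: "(np::int) > 0"
  shows "\<exists>s. (s = 1 \<or> s = -1) \<and> (\<forall>c t. c \<ge> 0 \<longrightarrow> min 0 (s*c*np) \<le> t \<and> t \<le> max 0 (s*c*np) \<longrightarrow> per_pos X p t \<noteq> w)"
proof (cases "\<exists>k>0. per_pos X p k = w")
  case True
  then obtain kw where kw: "kw > 0" "per_pos X p kw = w" by blast
  show ?thesis
  proof (rule exI[of _ "-1"], intro conjI allI impI disjI2 refl)
    fix c t :: int assume c: "c \<ge> 0" and t: "min 0 (-1*c*np) \<le> t \<and> t \<le> max 0 (-1*c*np)"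
    have "t \<le> 0" using t c np by (simp add: mult_nonneg_nonneg)
    show "per_pos X p t \<noteq> w"
    proof
      assume "per_pos X p t = w"
      hence "t = kw" using inj_line[OF fb] kw(2) by metis
      thus False using \<open>t \<le> 0\<close> kw(1) by simp
    qed
  qed
next
  case False
  show ?thesis
  proof (rule exI[of _ 1], intro conjI allI impI disjI1 refl)
    fix c t :: int assume c: "c \<ge> 0" and t: "min 0 (1*c*np) \<le> t \<and> t \<le> max 0 (1*c*np)"
    have "t \<ge> 0" using t c np by (simp add: mult_nonneg_nonneg)
    show "per_pos X p t \<noteq> w"
    proof (cases "t = 0")
      case True thus ?thesis using ne by simp
    next
      case f: False thus ?thesis using False \<open>t \<ge> 0\<close> by auto
    qed
  qed
qed

lemma route:
  assumes ok: "grid_ok m p q" and gs: "grid_sub \<alpha> m p q"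
    and w1: "w \<noteq> cpt m p q a b" and w2: "w \<noteq> cpt m p q a' b'"
  shows "(cpt m p q a b, cpt m p q a' b') \<in> (Ew \<alpha> w)\<^sup>*"
proof -
  let ?c = "cpt m p q"
  have fbp: "free_biinf p" and fbq: "free_biinf q" and D: "cr (disp p) (disp q) \<noteq> 0"
    using ok by (auto simp: grid_ok_def cr_def)
  have D': "cr (disp q) (disp p) \<noteq> 0" using D cr_swap[of "disp q" "disp p"] by simp
  have pne: "p \<noteq> []" and qne: "q \<noteq> []" using fbp fbq by (auto simp: free_biinf_def)
  define np where "np = int (length p)"
  define nq where "nq = int (length q)"
  have np: "np > 0" and nq: "nq > 0" using pne qne by (auto simp: np_def nq_def)
  have lineP: "path_sub \<alpha> UNIV (per_pos (?c i j) p)" for i j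
    using gs unfolding grid_sub_def cpt_def by blast
  have lineQ: "path_sub \<alpha> UNIV (per_pos (?c i j) q)" for i j
    using gs unfolding grid_sub_def cpt_def by blast
  obtain Bc where Bc: "Bc \<ge> 0" "\<forall>i j k. per_pos (?c i j) q k = w \<longrightarrow> \<bar>i\<bar> \<le> Bc"
    using bad_cols[OF D'] by blast
  obtain Br where Br: "Br \<ge> 0" "\<forall>i j k. per_pos (?c i j) p k = w \<longrightarrow> \<bar>j\<bar> \<le> Br"
    using bad_rows[OF D] by blast
  obtain s1 where s1: "s1 = 1 \<or> s1 = -1"
    "\<forall>c t. c \<ge> 0 \<longrightarrow> min 0 (s1*c*np) \<le> t \<and> t \<le> max 0 (s1*c*np) \<longrightarrow> per_pos (?c a b) p t \<noteq> w"
    using side_choice[OF fbp _ np, of "?c a b" w] w1 by metis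
  obtain s2 where s2: "s2 = 1 \<or> s2 = -1"
    "\<forall>c t. c \<ge> 0 \<longrightarrow> min 0 (s2*c*nq) \<le> t \<and> t \<le> max 0 (s2*c*nq) \<longrightarrow> per_pos (?c a' b') q t \<noteq> w"
    using side_choice[OF fbq _ nq, of "?c a' b'" w] w2 by metis
  define c1 where "c1 = \<bar>a\<bar> + Bc + 1"
  define c2 where "c2 = \<bar>b'\<bar> + Br + 1"
  define i where "i = a + s1 * c1"
  define j where "j = b' + s2 * c2"
  have ci: "\<bar>i\<bar> > Bc" using s1(1) by (auto simp: i_def c1_def)
  have cj: "\<bar>j\<bar> > Br" using s2(1) by (auto simp: j_def c2_def)
  have ia: "(i - a) * np = s1 * c1 * np" by (simp add: i_def)
  have jb: "(j - b') * nq = s2 * c2 * nq" by (simp add: j_def)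
  have c1p: "c1 \<ge> 0" using Bc(1) by (simp add: c1_def)
  have c2p: "c2 \<ge> 0" using Br(1) by (simp add: c2_def)
  have ncol: "\<forall>t. per_pos (?c i b) q t \<noteq> w" using Bc(2) ci by (metis not_le)
  have nrow: "\<forall>t. per_pos (?c i j) p t \<noteq> w" using Br(2) cj by (metis not_le)
  have st1: "(?c a b, ?c i b) \<in> (Ew \<alpha> w)\<^sup>*"
  proof -
    have "(per_pos (?c a b) p 0, per_pos (?c a b) p ((i - a) * np)) \<in> (Ew \<alpha> w)\<^sup>*"
      apply (rule seg[OF lineP])
      unfolding ia using s1(2)[rule_format, OF c1p] by blast
    thus ?thesis using row_pt[OF pne, of m q a b "i - a"] by (simp add: np_def)
  qed
  have st2: "(?c i b, ?c i j) \<in> (Ew \<alpha> w)\<^sup>*"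
  proof -
    have "(per_pos (?c i b) q 0, per_pos (?c i b) q ((j - b) * nq)) \<in> (Ew \<alpha> w)\<^sup>*"
      apply (rule seg[OF lineQ])
      using ncol by simp
    thus ?thesis using col_pt[OF qne, of m p i b "j - b"] by (simp add: nq_def)
  qed
  have st3: "(?c i j, ?c a' j) \<in> (Ew \<alpha> w)\<^sup>*"
  proof -
    have "(per_pos (?c i j) p 0, per_pos (?c i j) p ((a' - i) * np)) \<in> (Ew \<alpha> w)\<^sup>*"
      apply (rule seg[OF lineP])
      using nrow by simp
    thus ?thesis using row_pt[OF pne, of m q i j "a' - i"] by (simp add: np_def)
  qed
  have st4: "(?c a' j, ?c a' b') \<in> (Ew \<alpha> w)\<^sup>*"
  proof -
    have "(per_pos (?c a' b') q ((j - b') * nq), per_pos (?c a' b') q 0) \<in> (Ew \<alpha> w)\<^sup>*"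
      apply (rule seg[OF lineQ])
      unfolding jb using s2(2)[rule_format, OF c2p] by (metis min.commute max.commute)
    thus ?thesis using col_pt[OF qne, of m p a' b' "j - b'"] by (simp add: nq_def)
  qed
  show ?thesis using st1 st2 st3 st4 by (meson rtrancl_trans)
qed


lemma per_pos_B:
  assumes "r \<noteq> []"
  shows "per_pos (padd A l0) r j = padd (per_pos A r (j + K * int (length r))) (padd l0 (psmul (-K) (disp r)))"
  using per_pos_shift[OF assms, of A j K] per_pos_transl[of A l0 r j]
  by (simp add: padd_def psmul_def algebra_simps)

lemma v_nonzero:
  assumes "free_fin r" "r \<noteq> []" shows "disp r \<noteq> (0,0)"
proof
  assume h: "disp r = (0,0)"
  have "(\<lambda>i. disp (take i r)) 0 = (\<lambda>i. disp (take i r)) (length r)" using h by simp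
  moreover have "0 \<in> {0..length r}" "length r \<in> {0..length r}" by auto
  ultimately have "(0::nat) = length r" using assms(1) unfolding free_fin_def by (meson inj_onD)
  thus False using assms(2) by simp
qed

lemma lattice_id:
  fixes P Q v :: pt
  defines "D \<equiv> cr P Q"
  shows "D * D * fst v = (D * cr v Q) * fst P + (- D * cr v P) * fst Q"
    and "D * D * snd v = (D * cr v Q) * snd P + (- D * cr v P) * snd Q"
  unfolding D_def cr_def by algebra+

lemma choose_U:
  fixes P Q v :: pt
  assumes "cr P Q \<noteq> 0" "v \<noteq> (0,0)"
  shows "\<exists>u1 u2. u1 * cr v P + u2 * cr v Q \<ge> 1"
proof (cases "cr v P = 0")
  case False
  show ?thesis
  proof (cases "cr v P > 0")
    case True thus ?thesis by (intro exI[of _ 1] exI[of _ 0]) simp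
  next
    case f: False thus ?thesis using False by (intro exI[of _ "-1"] exI[of _ 0]) simp
  qed
next
  case True
  have "cr v Q \<noteq> 0"
  proof
    assume q: "cr v Q = 0"
    have "cr P Q * cr P Q * fst v = 0" "cr P Q * cr P Q * snd v = 0"
      using lattice_id[of P Q v] True q by simp_all
    hence "fst v = 0" "snd v = 0" using assms(1) by simp_all
    thus False using assms(2) by (simp add: prod_eq_iff)
  qed
  show ?thesis
  proof (cases "cr v Q > 0")
    case t: True thus ?thesis by (intro exI[of _ 0] exI[of _ 1]) simp
  next
    case f: False thus ?thesis using \<open>cr v Q \<noteq> 0\<close> by (intro exI[of _ 0] exI[of _ "-1"]) simp
  qed
qed


theorem mainTheorem9:
  fixes T :: "'g tile set" and \<sigma> :: "'g tile" and \<alpha>max :: "'g assembly"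
    and m p q r :: "dir list" and A :: pt
  assumes "finite T"
    and "confluent T \<sigma>"
    and "is_max_producible T \<sigma> \<alpha>max"
    and "grid_ok m p q"
    and "grid_sub \<alpha>max m p q"
    and "r \<noteq> []" and "free_fin r"
    and "path_sub \<alpha>max {0..} (per_pos A r)"
  shows "\<exists>B. path_sub \<alpha>max UNIV (per_pos B r)"
proof -
  note finT = assms(1) and mx = assms(3) and ok = assms(4) and gs = assms(5)
    and rne = assms(6) and ray = assms(8)
  let ?\<alpha> = \<alpha>max
  define n where "n = int (length r)"
  define v where "v = disp r"
  define P where "P = disp p"
  define Q where "Q = disp q"
  define D where "D = cr P Q"
  have n1: "n \<ge> 1" using rne by (simp add: n_def Suc_le_eq)
  have v0: "v \<noteq> (0,0)" using v_nonzero[OF assms(7) rne] by (simp add: v_def)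
  have D0: "D \<noteq> 0" using ok by (simp add: grid_ok_def D_def P_def Q_def cr_def)
  have prod: "producible T \<sigma> ?\<alpha>" using mx by (simp add: is_max_producible_def)
  have ranT: "ran ?\<alpha> \<subseteq> insert \<sigma> T" using prod by (simp add: producible_def)
  have reach: "((0,0), x) \<in> (Eg ?\<alpha>)\<^sup>*" if "x \<in> dom ?\<alpha>" for x
    using prod that unfolding producible_def Eg_def by blast
  have lineP: "path_sub ?\<alpha> UNIV (per_pos (cpt m p q i j) p)" for i j
    using gs unfolding grid_sub_def cpt_def by blast
  have cdom: "cpt m p q i j \<in> dom ?\<alpha>" for i j
    using lineP[of i j] unfolding path_sub_def by (metis UNIV_I per_pos_0)
  obtain u1 u2 where U: "u1 * cr v P + u2 * cr v Q \<ge> 1"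
    using choose_U[of P Q v] D0 v0 by (auto simp: D_def)
  define phiU where "phiU = u1 * cr v P + u2 * cr v Q"
  define cp where "cp = D * D"
  define al where "al = D * cr v Q"
  define be where "be = - D * cr v P"
  have cp1: "cp \<ge> 1" using D0 by (simp add: cp_def) (smt (verit) mult_le_cancel_left1 zero_less_mult_iff)
  have lid: "cp * fst v = al * fst P + be * fst Q" "cp * snd v = al * snd P + be * snd Q"
    using lattice_id[of P Q v] by (simp_all add: cp_def al_def be_def D_def)
  define z where "z = (\<lambda>a k::int. cpt m p q (a*u1 - k*al) (a*u2 - k*be))"
  have crz: "cr v (z a k) = cr v (disp m) + a * phiU" for a k
  proof -
    have "cr v (z a k) = cr v (disp m) + (a*u1 - k*al) * cr v P + (a*u2 - k*be) * cr v Q"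
      by (simp add: z_def cpt_def P_def Q_def)
    also have "\<dots> = cr v (disp m) + a * phiU"
      by (simp add: phiU_def al_def be_def algebra_simps)
    finally show ?thesis .
  qed
  have zz: "z a k = padd (z a 0) (psmul (- (k * cp)) v)" for a k
  proof -
    have h1: "cp * (k * fst v) = al * (k * fst P) + be * (k * fst Q)"
      using lid(1) by (metis distrib_left mult.left_commute)
    have h2: "cp * (k * snd v) = al * (k * snd P) + be * (k * snd Q)"
      using lid(2) by (metis distrib_left mult.left_commute)
    show ?thesis using h1 h2 by (simp add: z_def cpt_def padd_def psmul_def P_def Q_def algebra_simps)
  qed
  define c00 where "c00 = cpt m p q 0 0"
  obtain F0 where F0: "finite F0" "(0,0) \<in> F0" "c00 \<in> F0"
      "\<forall>w. w \<notin> F0 \<longrightarrow> ((0,0), c00) \<in> (Ew ?\<alpha> w)\<^sup>*"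
    using avoid_finite[OF reach[OF cdom[of 0 0]]] by (auto simp: c00_def)
  obtain M0 where M0: "M0 \<ge> 0" "\<forall>x\<in>cr v ` F0. \<bar>x\<bar> \<le> M0"
    using finite_int_bound[of "cr v ` F0"] F0(1) by blast
  define tl where "tl = (\<lambda>a k::nat. ?\<alpha> (z (int a) (int k)))"
  have tlsub: "tl a k \<in> Some ` insert \<sigma> T" for a k
  proof -
    obtain t where t: "?\<alpha> (z (int a) (int k)) = Some t" using cdom by (auto simp: z_def)
    hence "t \<in> insert \<sigma> T" using ranT by (meson ranI subsetD)
    thus ?thesis using t by (simp add: tl_def image_iff)
  qed
  have finS: "finite (Some ` insert \<sigma> T)" using finT by simp
  have tlfin: "finite (range (tl a))" for a
    by (rule finite_subset[OF _ finS]) (use tlsub in blast)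
  have "\<exists>k0. infinite {k. tl a k = tl a k0}" for a
    using pigeonhole_infinite[of "UNIV::nat set" "tl a"] tlfin[of a] by auto
  then obtain \<kappa> where \<kappa>: "\<And>a. infinite {k. tl a k = tl a (\<kappa> a)}" by metis
  define \<tau> where "\<tau> = (\<lambda>a. tl a (\<kappa> a))"
  have "finite (range \<tau>)"
    by (rule finite_subset[OF _ finS]) (use tlsub in \<open>auto simp: \<tau>_def\<close>)
  then obtain a1 where a1: "infinite {a. \<tau> a = \<tau> a1}"
    using pigeonhole_infinite[of "UNIV::nat set" \<tau>] by auto
  define k1 where "k1 = \<kappa> a1"
  define c where "c = z (int a1) (int k1)"
  have ac: "?\<alpha> c = \<tau> a1" by (simp add: c_def \<tau>_def tl_def k1_def)
  have Adom: "A \<in> dom ?\<alpha>" using ray unfolding path_sub_def by (metis atLeast_iff order_refl per_pos_0)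
  have "(c, A) \<in> (Eg ?\<alpha>)\<^sup>*"
    using Eg_rev[OF reach[OF cdom]] reach[OF Adom] by (simp add: c_def z_def) (meson rtrancl_trans)
  then obtain N where "(c, A) \<in> (Eg ?\<alpha>) ^^ N" using rtrancl_imp_relpow by blast
  then obtain f where f: "f 0 = c" "f N = A" "\<forall>i<N. (f i, f (Suc i)) \<in> Eg ?\<alpha>"
    unfolding relpow_fun_conv by blast
  define Y where "Y = (\<lambda>k. if k < N then f k else per_pos A r (int (k - N)))"
  have Y0: "Y 0 = c" using f by (cases "N = 0") (auto simp: Y_def)
  have Yray: "Y (N + nat i) = per_pos A r i" if "i \<ge> 0" for i
    using that by (simp add: Y_def)
  have walk: "\<forall>k. bg_edge ?\<alpha> (Y k) (Y (Suc k))"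
  proof
    fix k
    show "bg_edge ?\<alpha> (Y k) (Y (Suc k))"
    proof (cases "Suc k < N")
      case True thus ?thesis using f(3) by (simp add: Y_def Eg_def)
    next
      case False
      show ?thesis
      proof (cases "k < N")
        case True
        hence "Suc k = N" using False by simp
        have "bg_edge ?\<alpha> (f k) (f (Suc k))" using f(3) True by (simp add: Eg_def)
        thus ?thesis using f(2) True \<open>Suc k = N\<close> by (simp add: Y_def)
      next
        case kN: False
        have "bg_edge ?\<alpha> (per_pos A r (int (k - N))) (per_pos A r (int (k - N) + 1))"
          using ray unfolding path_sub_def by simp
        moreover have "int (Suc k - N) = int (k - N) + 1" using kN by simp
        ultimately show ?thesis using kN False by (simp add: Y_def del: of_nat_diff)
      qed
    qed
  qed
  obtain Mr where Mr: "Mr \<ge> 0" "\<forall>t. \<bar>cr v (disp (take t r))\<bar> \<le> Mr"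
    using prefix_cr_bound by blast
  obtain K1 where K1: "K1 \<ge> 0" "\<forall>x\<in>cr v ` f ` {..N}. \<bar>x\<bar> \<le> K1"
    using finite_int_bound[of "cr v ` f ` {..N}"] by blast
  define K where "K = K1 + \<bar>cr v A\<bar> + Mr"
  have Kb: "\<bar>cr v (Y k)\<bar> \<le> K" for k
  proof (cases "k < N")
    case True
    hence "\<bar>cr v (f k)\<bar> \<le> K1" using K1(2) by simp
    thus ?thesis using True Mr(1) by (simp add: Y_def K_def)
  next
    case False
    have "cr v (per_pos A r (int (k - N))) = cr v A + cr v (disp (take (nat (int (k - N) mod n)) r))"
      by (simp add: per_pos_def v_def n_def)
    moreover have "\<bar>cr v (disp (take (nat (int (k - N) mod n)) r))\<bar> \<le> Mr" using Mr(2) by blast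
    ultimately show ?thesis using False K1(1) unfolding Y_def K_def by simp
  qed
  have K0: "K \<ge> 0" using K1(1) Mr(1) by (simp add: K_def)
  obtain a2 where a2: "a2 \<ge> a1 + nat (K + M0 + 1)" "\<tau> a2 = \<tau> a1"
    using a1 unfolding infinite_nat_iff_unbounded_le by blast
  define Sk where "Sk = {k. tl a2 k = \<tau> a2}"
  have Sinf: "infinite Sk" using \<kappa>[of a2] by (simp add: Sk_def \<tau>_def)
  define l0 where "l0 = (fst (z (int a2) 0) - fst c, snd (z (int a2) 0) - snd c)"
  define l where "l = (\<lambda>k::nat. padd l0 (psmul (- (int k * cp)) v))"
  have cl: "padd c (l k) = z (int a2) (int k)" for k
    using zz[of "int a2" "int k"] by (simp add: l_def l0_def padd_def psmul_def)
  have crl: "cr v (l k) = (int a2 - int a1) * phiU" for k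
  proof -
    have "cr v (l k) = cr v l0" by (simp add: l_def)
    also have "\<dots> = cr v (z (int a2) 0) - cr v c"
      by (simp add: l0_def cr_def algebra_simps)
    finally have "cr v (l k) = cr v (z (int a2) 0) - cr v c" .
    thus ?thesis using crz by (simp add: c_def algebra_simps)
  qed
  have big: "cr v (l k) \<ge> K + M0 + 1" for k
  proof -
    have "int a2 - int a1 \<ge> K + M0 + 1" using a2(1) K0 M0(1) by linarith
    moreover have "phiU \<ge> 1" using U by (simp add: phiU_def)
    ultimately have "(int a2 - int a1) * phiU \<ge> K + M0 + 1" using K0 M0(1)
      by (smt (verit) mult_le_cancel_left1)
    thus ?thesis using crl by simp
  qed
  have copyres: "?\<alpha> (padd (Y j) (l k)) = ?\<alpha> (Y j)" if kS: "k \<in> Sk" for j k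
  proof (rule copy[OF mx walk])
    show "?\<alpha> (padd (Y 0) (l k)) = ?\<alpha> (Y 0)"
      using kS a2(2) ac by (simp add: Y0 cl Sk_def tl_def)
    show "\<forall>k'. padd (Y k') (l k) \<noteq> padd (Y 0) (l k) \<longrightarrow>
        padd (Y k') (l k) \<noteq> (0,0) \<and> ((0,0), padd (Y 0) (l k)) \<in> (Ew ?\<alpha> (padd (Y k') (l k)))\<^sup>*"
    proof (intro allI impI)
      fix k' assume ne: "padd (Y k') (l k) \<noteq> padd (Y 0) (l k)"
      define w where "w = padd (Y k') (l k)"
      have "cr v w > M0" using Kb[of k'] big[of k] by (simp add: w_def)
      hence wF: "w \<notin> F0" using M0(2) by force
      have w00: "w \<noteq> (0,0)" using wF F0(2) by auto
      have r1: "((0,0), c00) \<in> (Ew ?\<alpha> w)\<^sup>*" using F0(4) wF by blast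
      have r2: "(c00, padd (Y 0) (l k)) \<in> (Ew ?\<alpha> w)\<^sup>*"
        unfolding Y0 cl c00_def z_def
        by (rule route[OF ok gs]) (use wF F0(3) ne in \<open>auto simp: c00_def w_def Y0 cl z_def\<close>)
      show "padd (Y k') (l k) \<noteq> (0,0) \<and> ((0,0), padd (Y 0) (l k)) \<in> (Ew ?\<alpha> (padd (Y k') (l k)))\<^sup>*"
        using w00 r1 r2 unfolding w_def by (meson rtrancl_trans)
    qed
  qed
  define B where "B = padd A l0"
  have key: "\<exists>k i. k \<in> Sk \<and> i \<ge> 0 \<and> per_pos B r j = padd (per_pos A r i) (l k)
            \<and> per_pos B r (j+1) = padd (per_pos A r (i+1)) (l k)" for j
  proof -
    obtain k where k: "k \<ge> nat \<bar>j\<bar>" "k \<in> Sk" using Sinf unfolding infinite_nat_iff_unbounded_le by blast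
    define i where "i = j + (int k * cp) * n"
    have "int k * cp * n \<ge> int k" using cp1 n1
      by (smt (verit) mult_le_cancel_left1 mult_nonneg_nonneg of_nat_0_le_iff)
    hence i0: "i \<ge> 0" using k(1) by (simp add: i_def)
    have e1: "per_pos B r j = padd (per_pos A r i) (l k)"
      using per_pos_B[OF rne, of A l0 j "int k * cp"] by (simp add: B_def i_def l_def n_def v_def)
    have e2: "per_pos B r (j+1) = padd (per_pos A r (i+1)) (l k)"
      using per_pos_B[OF rne, of A l0 "j+1" "int k * cp"] by (simp add: B_def i_def l_def n_def v_def algebra_simps)
    show ?thesis using k(2) i0 e1 e2 by blast
  qed
  have "path_sub ?\<alpha> UNIV (per_pos B r)"
    unfolding path_sub_def
  proof (intro conjI allI ballI impI)
    fix j :: int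
    obtain k i where ki: "k \<in> Sk" "i \<ge> 0" "per_pos B r j = padd (per_pos A r i) (l k)"
       "per_pos B r (j+1) = padd (per_pos A r (i+1)) (l k)" using key by blast
    have c1: "?\<alpha> (padd (per_pos A r i) (l k)) = ?\<alpha> (per_pos A r i)"
      using copyres[OF ki(1), of "N + nat i"] Yray[OF ki(2)] by simp
    have c2: "?\<alpha> (padd (per_pos A r (i+1)) (l k)) = ?\<alpha> (per_pos A r (i+1))"
      using copyres[OF ki(1), of "N + nat (i+1)"] Yray[of "i+1"] ki(2) by simp
    have "per_pos A r i \<in> dom ?\<alpha>" using ray ki(2) unfolding path_sub_def by simp
    thus "per_pos B r j \<in> dom ?\<alpha>" using c1 ki(3) by (simp add: domIff)
    have "bg_edge ?\<alpha> (per_pos A r i) (per_pos A r (i+1))" using ray ki(2) unfolding path_sub_def by simp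
    thus "bg_edge ?\<alpha> (per_pos B r j) (per_pos B r (j+1))"
      using bg_edge_transl c1 c2 ki(3,4) by metis
  qed
  thus ?thesis by blast
qed

end
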